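(* Fix a device $n$, a control parameter $V\ge0$ and a frame $k$. For any feasible decisions $0\le\gamma_n^k\le1$ and $0\le p_n^t\le\overline{P}_n$ for all $t\in\mathcal{T}_k=\{kT,\dots,(k+1)T-1\}$, $$\mathcal{D}_n(Q_n^{kT})\le\beta_2T+\mathbb{E}\Big\{\sum_{t\in\mathcal{T}_k}VX_n^t+Q_n^{kT}(E_n^t-\overline{E}_n)\,\Big|\,Q_n^{kT}\Big\},$$ where $\beta_2=\beta_1+\frac{(T-1)[(E_{n,\max}-\overline{E}_n)E_{n,\max}+\overline{E}_n^2]}{2}$ and $\beta_1=\frac12(E_{n,\max}^2+\overline{E}_n^2)$.
   Context: Device $n$ in a federated learning system consumes energy $E_n^t\ge0$ in slot $t$ (computation plus communication energy, determined by the freezing percentage $\gamma_n^k$ of the current frame and the transmit power $p_n^t$), and $E_{n,\max}$ is an upper bound with $E_n^t\le E_{n,\max}$ for all $t$. $\overline{E}_n>0$ is its average energy budget and $\overline{P}_n$ its peak power. $X_n^t=\lambda\mathbb{1}_n^tB_n(\gamma_n^k-1)$ is the per-slot convergence-error term, with constant $\lambda>0$, data size $B_n$, and success indicator $\mathbb{1}_n^t\in\{0,1\}$. The virtual energy-deficit queue evolves as $Q_n^{t+1}=\max\{Q_n^t+E_n^t-\overline{E}_n,0\}$ with $Q_n^0=0$. Slots are grouped into frames of $T$ slots. The $T$-slot conditional Lyapunov drift is $\Delta_{n,T}(Q_n^t)=\mathbb{E}\{\frac12(Q_n^{t+T})^2-\frac12(Q_n^t)^2\mid Q_n^t\}$,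 and the drift-plus-penalty of frame $k$ is $\mathcal{D}_n(Q_n^{kT})=\Delta_{n,T}(Q_n^{kT})+V\mathbb{E}\{\sum_{t\in\mathcal{T}_k}X_n^t\mid Q_n^{kT}\}$. Expectations are over channel randomness. *)

theory Defs
  imports "HOL-Probability.Probability"
begin

fun vqueue :: "(nat \<Rightarrow> real) \<Rightarrow> real \<Rightarrow> nat \<Rightarrow> real" where
  "vqueue E Ebar 0 = 0"
| "vqueue E Ebar (Suc t) = max (vqueue E Ebar t + E t - Ebar) 0"

definition frame_slots :: "nat \<Rightarrow> nat \<Rightarrow> nat set" where
  "frame_slots T k = {k * T ..< (k + 1) * T}"

definition gen_sigma :: "'a measure \<Rightarrow> ('a \<Rightarrow> real) \<Rightarrow> 'a measure" where
  "gen_sigma M Y = vimage_algebra (space M) Y borel"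

definition beta1 :: "real \<Rightarrow> real \<Rightarrow> real" where
  "beta1 Emax Ebar = (Emax\<^sup>2 + Ebar\<^sup>2) / 2"

definition beta2 :: "nat \<Rightarrow> real \<Rightarrow> real \<Rightarrow> real" where
  "beta2 T Emax Ebar = beta1 Emax Ebar
     + (real T - 1) * ((Emax - Ebar) * Emax + Ebar\<^sup>2) / 2"

end

theory Submission
  imports Defs
begin

lemma vq_nonneg: "vqueue e Eb t \<ge> 0" by (cases t) auto

lemma vq_up:
  assumes "\<And>t. 0 \<le> e t \<and> e t \<le> Emax" and "Eb \<ge> 0"
  shows "vqueue e Eb (n + j) - vqueue e Eb n \<le> real j * Emax"
proof (induction j)
  case 0 then show ?case by simp
next
  case (Suc j)
  have "vqueue e Eb (n + Suc j) \<le> vqueue e Eb (n + j) + Emax"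
    using assms(1)[of "n+j"] assms(2) vq_nonneg[of e Eb "n+j"] by auto
  with Suc show ?case by (simp add: algebra_simps)
qed

lemma vq_down:
  assumes "\<And>t. 0 \<le> e t \<and> e t \<le> Emax"
  shows "vqueue e Eb n - vqueue e Eb (n + j) \<le> real j * Eb"
proof (induction j)
  case 0 then show ?case by simp
next
  case (Suc j)
  have "vqueue e Eb (n + Suc j) \<ge> vqueue e Eb (n + j) + e (n+j) - Eb" by simp
  moreover have "real (Suc j) * Eb = real j * Eb + Eb" by (simp add: algebra_simps)
  ultimately show ?case using Suc assms[of "n+j"] by linarith
qed

lemma vq_zero:
  assumes "\<And>t. 0 \<le> e t \<and> e t \<le> Emax" and "Emax \<le> Eb"
  shows "vqueue e Eb t = 0"
proof (induction t)
  case 0 then show ?case by simp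
next
  case (Suc t)
  then show ?case using assms(1)[of t] assms(2) by simp
qed

lemma step_cross:
  assumes e: "\<And>t. 0 \<le> e t \<and> e t \<le> Emax" and Eb: "Eb > 0"
  shows "(vqueue e Eb (n + j) - vqueue e Eb n) * (e m - Eb)
         \<le> real j * ((Emax - Eb) * Emax + Eb\<^sup>2)"
proof -
  have Em0: "Emax \<ge> 0" using e[of 0] by linarith
  have ab: "(Emax - Eb) * Emax + Eb\<^sup>2 \<ge> 0"
  proof -
    have "(Emax - Eb) * Emax + Eb\<^sup>2 = (Emax - Eb/2)\<^sup>2 + 3/4 * Eb\<^sup>2"
      by (simp add: power2_eq_square algebra_simps)
    also have "\<dots> \<ge> 0" by simp
    finally show ?thesis .
  qed
  have j0: "real j \<ge> 0" by simp
  show ?thesis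
  proof (cases "Emax \<ge> Eb")
    case False
    then have "vqueue e Eb t = 0" for t using vq_zero[OF e] by simp
    then show ?thesis using ab by simp
  next
    case True
    have a0: "(Emax - Eb) * Emax \<ge> 0" using True Em0 by simp
    have b0: "real j * Eb\<^sup>2 \<ge> 0" by simp
    have ja0: "real j * ((Emax - Eb) * Emax) \<ge> 0" using a0 by simp
    define D where "D = vqueue e Eb (n + j) - vqueue e Eb n"
    have up: "D \<le> real j * Emax" unfolding D_def using vq_up[OF e] Eb by simp
    have dn: "- D \<le> real j * Eb" unfolding D_def using vq_down[OF e] by simp
    show ?thesis
    proof (cases "e m \<ge> Eb")
      case True
      have "D * (e m - Eb) \<le> (real j * Emax) * (e m - Eb)"
        using up True by (intro mult_right_mono) auto
      also have "\<dots> \<le> (real j * Emax) * (Emax - Eb)"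
        using e[of m] Em0 by (intro mult_left_mono) auto
      finally have "D * (e m - Eb) \<le> real j * ((Emax - Eb) * Emax)" by (simp add: algebra_simps)
      moreover have "real j * ((Emax - Eb) * Emax + Eb\<^sup>2) = real j * ((Emax - Eb) * Emax) + real j * Eb\<^sup>2"
        by (simp add: algebra_simps)
      ultimately show ?thesis unfolding D_def[symmetric] using b0 by linarith
    next
      case False
      have "D * (e m - Eb) = (- D) * (Eb - e m)" by (simp add: algebra_simps)
      also have "\<dots> \<le> (real j * Eb) * (Eb - e m)"
        using dn False by (intro mult_right_mono) auto
      also have "\<dots> \<le> (real j * Eb) * Eb"
        using e[of m] Eb by (intro mult_left_mono) auto
      finally have "D * (e m - Eb) \<le> real j * Eb\<^sup>2" by (simp add: power2_eq_square algebra_simps)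
      moreover have "real j * ((Emax - Eb) * Emax + Eb\<^sup>2) = real j * ((Emax - Eb) * Emax) + real j * Eb\<^sup>2"
        by (simp add: algebra_simps)
      ultimately show ?thesis unfolding D_def[symmetric] using ja0 by linarith
    qed
  qed
qed

lemma path_bound:
  assumes e: "\<And>t. 0 \<le> e t \<and> e t \<le> Emax" and Eb: "Eb > 0"
  shows "(vqueue e Eb (n+j))\<^sup>2/2 - (vqueue e Eb n)\<^sup>2/2 \<le> real j * beta1 Emax Eb
     + real j * (real j - 1) / 2 * ((Emax - Eb) * Emax + Eb\<^sup>2)
     + (\<Sum>t\<in>{n..<n+j}. vqueue e Eb n * (e t - Eb))"
proof (induction j)
  case 0 then show ?case by simp
next
  case (Suc j)
  define q' where "q' = vqueue e Eb (n + j)"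
  define q0 where "q0 = vqueue e Eb n"
  define d where "d = e (n+j) - Eb"
  define c where "c = (Emax - Eb) * Emax + Eb\<^sup>2"
  have h1: "(vqueue e Eb (n + Suc j))\<^sup>2 \<le> (q' + d)\<^sup>2"
  proof (cases "q' + d \<ge> 0")
    case True
    then show ?thesis by (simp add: q'_def d_def algebra_simps)
  next
    case False
    then have "vqueue e Eb (n + Suc j) = 0" by (simp add: q'_def d_def)
    then show ?thesis by simp
  qed
  have h2: "d\<^sup>2 \<le> Emax\<^sup>2 + Eb\<^sup>2"
  proof -
    have x2: "(e (n+j))\<^sup>2 \<le> Emax\<^sup>2" using e[of "n+j"] by (intro power_mono) auto
    have xe: "e (n+j) * Eb \<ge> 0" using e[of "n+j"] Eb by simp
    have "d\<^sup>2 = (e (n+j))\<^sup>2 - 2 * (e (n+j) * Eb) + Eb\<^sup>2"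
      unfolding d_def by (simp add: power2_eq_square algebra_simps)
    then show ?thesis using x2 xe by linarith
  qed
  have h3: "(q' - q0) * d \<le> real j * c"
    unfolding q'_def q0_def d_def c_def by (rule step_cross[OF e Eb])
  have ex: "(q' + d)\<^sup>2 = q'\<^sup>2 + d\<^sup>2 + 2 * (q0 * d) + 2 * ((q' - q0) * d)"
    by (simp add: power2_eq_square algebra_simps)
  have sumeq: "(\<Sum>t\<in>{n..<n+Suc j}. q0 * (e t - Eb)) = (\<Sum>t\<in>{n..<n+j}. q0 * (e t - Eb)) + q0 * d"
    by (simp add: d_def)
  have IH: "q'\<^sup>2/2 - q0\<^sup>2/2 \<le> real j * beta1 Emax Eb + real j * (real j - 1) / 2 * c
     + (\<Sum>t\<in>{n..<n+j}. q0 * (e t - Eb))"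
    using Suc unfolding q'_def q0_def c_def .
  have arith: "real (Suc j) * (real (Suc j) - 1) / 2 * c = real j * (real j - 1) / 2 * c + real j * c"
    by (simp add: field_simps)
  have b1: "real (Suc j) * beta1 Emax Eb = real j * beta1 Emax Eb + (Emax\<^sup>2 + Eb\<^sup>2)/2"
    by (simp add: beta1_def field_simps)
  have "(vqueue e Eb (n + Suc j))\<^sup>2/2 - q0\<^sup>2/2 \<le> real (Suc j) * beta1 Emax Eb
     + real (Suc j) * (real (Suc j) - 1) / 2 * c + (\<Sum>t\<in>{n..<n+Suc j}. q0 * (e t - Eb))"
  proof -
    have gen: "\<And>A B D R X Y Z::real. A \<le> R \<Longrightarrow> B \<le> X \<Longrightarrow> D \<le> Y \<Longrightarrow> A + B/2 + Z + D \<le> R + X/2 + Z + Y"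
      by linarith
    have "(vqueue e Eb (n + Suc j))\<^sup>2/2 - q0\<^sup>2/2 \<le> (q' + d)\<^sup>2/2 - q0\<^sup>2/2" using h1 by simp
    also have "\<dots> = (q'\<^sup>2/2 - q0\<^sup>2/2) + d\<^sup>2/2 + q0 * d + (q' - q0) * d" unfolding ex by simp
    also have "\<dots> \<le> (real j * beta1 Emax Eb + real j * (real j - 1) / 2 * c
     + (\<Sum>t\<in>{n..<n+j}. q0 * (e t - Eb))) + (Emax\<^sup>2 + Eb\<^sup>2)/2 + q0 * d + real j * c"
      using gen[OF IH h2 h3] by simp
    finally show ?thesis unfolding sumeq arith b1 by linarith
  qed
  then show ?case unfolding q0_def c_def .
qed

theorem lemma3:
  fixes M :: "'a measure"
    and E :: "nat \<Rightarrow> 'a \<Rightarrow> real"       \<comment> \<open>energy E_n^t(\<omega>)\<close>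
    and ind :: "nat \<Rightarrow> 'a \<Rightarrow> real"     \<comment> \<open>success indicator 1_n^t(\<omega>)\<close>
    and \<gamma> :: "'a \<Rightarrow> real"              \<comment> \<open>freezing percentage of frame k\<close>
    and p :: "nat \<Rightarrow> 'a \<Rightarrow> real"       \<comment> \<open>transmit power p_n^t\<close>
    and Emax Ebar Pbar lam B V :: real
    and T k :: nat
  assumes "prob_space M"
    and E_meas: "\<And>t. E t \<in> borel_measurable M"
    and E_bnd: "\<And>t \<omega>. \<omega> \<in> space M \<Longrightarrow> 0 \<le> E t \<omega> \<and> E t \<omega> \<le> Emax"
    and ind_meas: "\<And>t. ind t \<in> borel_measurable M"
    and ind_01: "\<And>t \<omega>. \<omega> \<in> space M \<Longrightarrow> ind t \<omega> \<in> {0, 1}"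
    and \<gamma>_meas: "\<gamma> \<in> borel_measurable M"
    and \<gamma>_feas: "\<And>\<omega>. \<omega> \<in> space M \<Longrightarrow> 0 \<le> \<gamma> \<omega> \<and> \<gamma> \<omega> \<le> 1"
    and p_meas: "\<And>t. p t \<in> borel_measurable M"
    and p_feas: "\<And>t \<omega>. t \<in> frame_slots T k \<Longrightarrow> \<omega> \<in> space M \<Longrightarrow> 0 \<le> p t \<omega> \<and> p t \<omega> \<le> Pbar"
    and "Ebar > 0" and "lam > 0" and "B \<ge> 0" and "V \<ge> 0" and "T \<ge> 1"
  shows
    "let Q = (\<lambda>t \<omega>. vqueue (\<lambda>s. E s \<omega>) Ebar t);
         X = (\<lambda>t \<omega>. lam * ind t \<omega> * B * (\<gamma> \<omega> - 1));
         F = gen_sigma M (Q (k * T));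
         D = (\<lambda>\<omega>. real_cond_exp M F
                   (\<lambda>\<omega>. (Q (k * T + T) \<omega>)\<^sup>2 / 2 - (Q (k * T) \<omega>)\<^sup>2 / 2) \<omega>
               + V * real_cond_exp M F (\<lambda>\<omega>. \<Sum>t\<in>frame_slots T k. X t \<omega>) \<omega>)
     in AE \<omega> in M. D \<omega> \<le> beta2 T Emax Ebar * real T
          + real_cond_exp M F
              (\<lambda>\<omega>. \<Sum>t\<in>frame_slots T k. V * X t \<omega> + Q (k * T) \<omega> * (E t \<omega> - Ebar)) \<omega>"
proof -
  interpret P: prob_space M by fact
  define Q where "Q = (\<lambda>t \<omega>. vqueue (\<lambda>s. E s \<omega>) Ebar t)"
  define X where "X = (\<lambda>t \<omega>. lam * ind t \<omega> * B * (\<gamma> \<omega> - 1))"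
  define F where "F = gen_sigma M (Q (k * T))"
  define A where "A = (\<lambda>\<omega>. (Q (k * T + T) \<omega>)\<^sup>2 / 2 - (Q (k * T) \<omega>)\<^sup>2 / 2)"
  define S where "S = (\<lambda>\<omega>. \<Sum>t\<in>frame_slots T k. X t \<omega>)"
  define G where "G = (\<lambda>\<omega>. \<Sum>t\<in>frame_slots T k. V * X t \<omega> + Q (k * T) \<omega> * (E t \<omega> - Ebar))"
  define c where "c = beta2 T Emax Ebar * real T"
  note [measurable] = E_meas ind_meas \<gamma>_meas
  have Qm[measurable]: "Q t \<in> borel_measurable M" for t
  proof (induction t)
    case 0 then show ?case by (simp add: Q_def)
  next
    case (Suc t)
    have eq: "Q (Suc t) = (\<lambda>\<omega>. max (Q t \<omega> + E t \<omega> - Ebar) 0)"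
      by (simp add: Q_def fun_eq_iff)
    show ?case unfolding eq using Suc by measurable
  qed
  have Xm[measurable]: "X t \<in> borel_measurable M" for t unfolding X_def by measurable
  have sub: "subalgebra M F"
    unfolding subalgebra_def F_def gen_sigma_def
    using sets_image_in_sets[OF _ Qm] by auto
  have "finite_measure_subalgebra M F"
    unfolding finite_measure_subalgebra_def finite_measure_subalgebra_axioms_def
    using sub P.finite_measure_axioms by auto
  then interpret SF: finite_measure_subalgebra M F .
  have intb: "integrable M f" if "f \<in> borel_measurable M" "\<And>\<omega>. \<omega> \<in> space M \<Longrightarrow> \<bar>f \<omega>\<bar> \<le> C" for f :: "'a \<Rightarrow> real" and C :: real
    by (rule P.integrable_const_bound[where B=C]) (use that in auto)
  have eb: "\<And>t. 0 \<le> E t \<omega> \<and> E t \<omega> \<le> Emax" if "\<omega> \<in> space M" for \<omega>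
    using E_bnd that by blast
  have Qb: "\<bar>Q t \<omega>\<bar> \<le> real t * Emax" if "\<omega> \<in> space M" for t \<omega>
    using vq_up[OF eb[OF that] less_imp_le[OF \<open>Ebar > 0\<close>], where n=0 and j=t] vq_nonneg[of "\<lambda>s. E s \<omega>" Ebar t]
    by (simp add: Q_def)
  have Xb: "\<bar>X t \<omega>\<bar> \<le> lam * B" if "\<omega> \<in> space M" for t \<omega>
  proof -
    have g: "\<bar>\<gamma> \<omega> - 1\<bar> \<le> 1" using \<gamma>_feas[OF that] by auto
    have "\<bar>X t \<omega>\<bar> = lam * B * \<bar>ind t \<omega>\<bar> * \<bar>\<gamma> \<omega> - 1\<bar>"
      using \<open>lam > 0\<close> \<open>B \<ge> 0\<close> by (simp add: X_def abs_mult)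
    also have "\<dots> \<le> lam * B * 1 * 1"
      using ind_01[OF that, of t] g \<open>lam > 0\<close> \<open>B \<ge> 0\<close>
      by (intro mult_mono) auto
    finally show ?thesis by simp
  qed
  have intA: "integrable M A"
  proof (rule intb[of _ "(real (k*T+T) * Emax)\<^sup>2 / 2 + (real (k*T) * Emax)\<^sup>2 / 2"])
    show "A \<in> borel_measurable M" unfolding A_def by measurable
    fix \<omega> assume w: "\<omega> \<in> space M"
    have "(Q (k*T+T) \<omega>)\<^sup>2 \<le> (real (k*T+T) * Emax)\<^sup>2"
      using Qb[OF w, of "k*T+T"] by (metis abs_le_square_iff abs_of_nonneg dual_order.trans abs_ge_self abs_ge_zero power2_abs)
    moreover have "(Q (k*T) \<omega>)\<^sup>2 \<le> (real (k*T) * Emax)\<^sup>2"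
      using Qb[OF w, of "k*T"] by (metis abs_le_square_iff abs_of_nonneg dual_order.trans abs_ge_self abs_ge_zero power2_abs)
    ultimately show "\<bar>A \<omega>\<bar> \<le> (real (k*T+T) * Emax)\<^sup>2 / 2 + (real (k*T) * Emax)\<^sup>2 / 2"
      unfolding A_def abs_le_iff
      using zero_le_power2[of "Q (k*T+T) \<omega>"] zero_le_power2[of "Q (k*T) \<omega>"]
        zero_le_power2[of "real (k*T+T) * Emax"] zero_le_power2[of "real (k*T) * Emax"]
      by (intro conjI; linarith)
  qed
  have intX: "integrable M (X t)" for t
    by (rule intb[OF Xm Xb])
  have intS: "integrable M S" unfolding S_def using intX by auto
  have termint: "integrable M (\<lambda>\<omega>. V * X t \<omega> + Q (k * T) \<omega> * (E t \<omega> - Ebar))" for t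
  proof (rule Bochner_Integration.integrable_add)
    show "integrable M (\<lambda>\<omega>. V * X t \<omega>)" using intX[of t] by auto
    show "integrable M (\<lambda>\<omega>. Q (k * T) \<omega> * (E t \<omega> - Ebar))"
    proof (rule intb[of _ "real (k*T) * Emax * (Emax + Ebar)"])
      show "(\<lambda>\<omega>. Q (k * T) \<omega> * (E t \<omega> - Ebar)) \<in> borel_measurable M" by measurable
      fix \<omega> assume w: "\<omega> \<in> space M"
      have "\<bar>E t \<omega> - Ebar\<bar> \<le> Emax + Ebar" using eb[OF w, of t] \<open>Ebar > 0\<close> by auto
      then show "\<bar>Q (k * T) \<omega> * (E t \<omega> - Ebar)\<bar> \<le> real (k*T) * Emax * (Emax + Ebar)"
        unfolding abs_mult using Qb[OF w, of "k*T"] by (intro mult_mono) auto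
    qed
  qed
  have intG: "integrable M G"
    unfolding G_def by (rule Bochner_Integration.integrable_sum[OF termint])
  have pw: "A \<omega> + V * S \<omega> - G \<omega> \<le> c" if w: "\<omega> \<in> space M" for \<omega>
  proof -
    have "G \<omega> = V * S \<omega> + (\<Sum>t\<in>frame_slots T k. Q (k * T) \<omega> * (E t \<omega> - Ebar))"
      unfolding G_def S_def by (simp add: sum.distrib sum_distrib_left)
    moreover have "A \<omega> \<le> c + (\<Sum>t\<in>frame_slots T k. Q (k * T) \<omega> * (E t \<omega> - Ebar))"
    proof -
      have fs: "frame_slots T k = {k*T..<k*T+T}" by (simp add: frame_slots_def algebra_simps)
      have "A \<omega> \<le> real T * beta1 Emax Ebar
         + real T * (real T - 1) / 2 * ((Emax - Ebar) * Emax + Ebar\<^sup>2)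
         + (\<Sum>t\<in>{k*T..<k*T+T}. Q (k * T) \<omega> * (E t \<omega> - Ebar))"
        unfolding A_def Q_def using path_bound[OF eb[OF w] \<open>Ebar > 0\<close>, where n="k*T" and j=T] by simp
      moreover have "c = real T * beta1 Emax Ebar
         + real T * (real T - 1) / 2 * ((Emax - Ebar) * Emax + Ebar\<^sup>2)"
        unfolding c_def beta2_def by (simp add: field_simps)
      ultimately show ?thesis unfolding fs by simp
    qed
    ultimately show ?thesis by simp
  qed
  have intH: "integrable M (\<lambda>\<omega>. A \<omega> + V * S \<omega> - G \<omega>)"
    using intA intS intG
    by (intro Bochner_Integration.integrable_diff Bochner_Integration.integrable_add integrable_mult_right)
  have le: "AE \<omega> in M. real_cond_exp M F (\<lambda>\<omega>. A \<omega> + V * S \<omega> - G \<omega>) \<omega> \<le> c"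
    by (rule SF.real_cond_exp_le_c[OF intH]) (use pw in auto)
  have e1: "AE \<omega> in M. real_cond_exp M F (\<lambda>\<omega>. (A \<omega> + V * S \<omega>) - G \<omega>) \<omega>
      = real_cond_exp M F (\<lambda>\<omega>. A \<omega> + V * S \<omega>) \<omega> - real_cond_exp M F G \<omega>"
    by (rule SF.real_cond_exp_diff) (use intA intS intG in auto)
  have e2: "AE \<omega> in M. real_cond_exp M F (\<lambda>\<omega>. A \<omega> + V * S \<omega>) \<omega>
      = real_cond_exp M F A \<omega> + real_cond_exp M F (\<lambda>\<omega>. V * S \<omega>) \<omega>"
    by (rule SF.real_cond_exp_add) (use intA intS in auto)
  have e3: "AE \<omega> in M. real_cond_exp M F (\<lambda>\<omega>. V * S \<omega>) \<omega> = V * real_cond_exp M F S \<omega>"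
    by (rule SF.real_cond_exp_cmult[OF intS])
  have key: "AE \<omega> in M. real_cond_exp M F A \<omega> + V * real_cond_exp M F S \<omega> \<le> c + real_cond_exp M F G \<omega>"
    using le e1 e2 e3 by eventually_elim simp
  then show ?thesis
    unfolding Let_def A_def[symmetric] S_def[symmetric] G_def[symmetric] c_def[symmetric]
      F_def[symmetric] X_def[symmetric] Q_def[symmetric] .
qed

end
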